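(* Let $n\ge 1$, let $x_1,\dots,x_n$ be distinct integers each greater than $1$, and let $D=\{1,0,x_1,\dots,x_n\}$. Then $\sigma(D)=4-n+\sum_{i=1}^n x_i$.
   Context: A signed tree is a pair $(T,s)$ where $T$ is a finite tree and $s:E(T)\to\{+,-\}$. The signed degree $sdeg(v)$ of a vertex is the number of incident positive edges minus the number of incident negative edges. $(T,s)$ realizes (satisfies) a set $D$ of integers if $D=\{sdeg(v):v\in V(T)\}$. For a set $D$ containing $1$ or $-1$, $\sigma(D)=\min\{|V(T)|: \text{some signed tree }(T,s)\text{ realizes }D\}$. *)

theory Defs
  imports Main
begin

definition is_graph :: "nat set \<Rightarrow> nat set set \<Rightarrow> bool" where
  "is_graph V E \<longleftrightarrow> finite V \<and> (\<forall>e\<in>E. \<exists>u v. u \<in> V \<and> v \<in> V \<and> u \<noteq> v \<and> e = {u, v})"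

definition adj :: "nat set set \<Rightarrow> (nat \<times> nat) set" where
  "adj E = {(u, v). {u, v} \<in> E}"

definition connected_graph :: "nat set \<Rightarrow> nat set set \<Rightarrow> bool" where
  "connected_graph V E \<longleftrightarrow> (\<forall>u\<in>V. \<forall>v\<in>V. (u, v) \<in> (adj E)\<^sup>*)"

definition has_cycle :: "nat set set \<Rightarrow> bool" where
  "has_cycle E \<longleftrightarrow> (\<exists>vs. length vs \<ge> 3 \<and> distinct vs \<and>
      (\<forall>i < length vs - 1. {vs ! i, vs ! (Suc i)} \<in> E) \<and> {last vs, hd vs} \<in> E)"

definition is_tree :: "nat set \<Rightarrow> nat set set \<Rightarrow> bool" where
  "is_tree V E \<longleftrightarrow> is_graph V E \<and> V \<noteq> {} \<and> connected_graph V E \<and> \<not> has_cycle E"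

text \<open>Signs: True = positive edge, False = negative edge.\<close>
definition sdeg :: "nat set set \<Rightarrow> (nat set \<Rightarrow> bool) \<Rightarrow> nat \<Rightarrow> int" where
  "sdeg E s v = int (card {e \<in> E. v \<in> e \<and> s e}) - int (card {e \<in> E. v \<in> e \<and> \<not> s e})"

definition realizes :: "nat set \<Rightarrow> nat set set \<Rightarrow> (nat set \<Rightarrow> bool) \<Rightarrow> int set \<Rightarrow> bool" where
  "realizes V E s D \<longleftrightarrow> is_tree V E \<and> D = sdeg E s ` V"

definition sigma :: "int set \<Rightarrow> nat" where
  "sigma D = (LEAST k. \<exists>V E s. realizes V E s D \<and> card V = k)"

end

theory Submission
  imports Defs
begin


lemma graph_finite_E: "is_graph V E \<Longrightarrow> finite E"
proof -
  assume g: "is_graph V E"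
  have "E \<subseteq> Pow V" using g unfolding is_graph_def by fastforce
  moreover have "finite V" using g unfolding is_graph_def by blast
  ultimately show ?thesis using finite_subset by blast
qed

lemma has_cycle_mono: "has_cycle E \<Longrightarrow> E \<subseteq> E' \<Longrightarrow> has_cycle E'"
proof -
  assume h: "has_cycle E" and s: "E \<subseteq> E'"
  obtain vs where "length vs \<ge> 3 \<and> distinct vs \<and>
      (\<forall>i < length vs - 1. {vs ! i, vs ! (Suc i)} \<in> E) \<and> {last vs, hd vs} \<in> E"
    using h unfolding has_cycle_def by blast
  then show ?thesis unfolding has_cycle_def using s by (intro exI[of _ vs]) auto
qed

lemma cycle_vertex_two_nbrs:
  assumes "has_cycle E"
  shows "\<exists>vs. length vs \<ge> 3 \<and> distinct vs \<and> (\<forall>i < length vs - 1. {vs ! i, vs ! (Suc i)} \<in> E) \<and> {last vs, hd vs} \<in> E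
     \<and> (\<forall>z\<in>set vs. \<exists>p q. p \<noteq> q \<and> {z,p} \<in> E \<and> {z,q} \<in> E)"
proof -
  obtain vs where L: "length vs \<ge> 3" and d: "distinct vs" and e: "\<forall>i < length vs - 1. {vs ! i, vs ! (Suc i)} \<in> E"
    and c: "{last vs, hd vs} \<in> E" using assms unfolding has_cycle_def by blast
  define L where "L = length vs"
  have ne: "vs \<noteq> []" using L by auto
  have lastv: "last vs = vs ! (L - 1)" using ne L_def by (simp add: last_conv_nth)
  have hdv: "hd vs = vs ! 0" using ne by (simp add: hd_conv_nth)
  have nb: "\<forall>z\<in>set vs. \<exists>p q. p \<noteq> q \<and> {z,p} \<in> E \<and> {z,q} \<in> E"
  proof
    fix z assume "z \<in> set vs"
    then obtain k where k: "k < L" "z = vs ! k" unfolding L_def by (metis in_set_conv_nth)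
    show "\<exists>p q. p \<noteq> q \<and> {z,p} \<in> E \<and> {z,q} \<in> E"
    proof (cases "k = 0")
      case True
      have "0 < length vs - 1" using L by simp
      then have "{vs!0, vs!Suc 0} \<in> E" using e by blast
      then have 1: "{z, vs!1} \<in> E" using k True by simp
      have 2: "{z, vs!(L-1)} \<in> E" using c k True lastv hdv by (simp add: insert_commute)
      have "1 \<noteq> L-1" "1 < length vs" "L-1 < length vs" using L L_def by auto
      then have neq: "vs!1 \<noteq> vs!(L-1)" using d nth_eq_iff_index_eq by metis
      show ?thesis using 1 2 neq by blast
    next
      case False
      show ?thesis
      proof (cases "k = L - 1")
        case True
        have "L-2 < length vs - 1" using L L_def by simp
        then have "{vs!(L-2), vs!Suc (L-2)} \<in> E" using e by blast
        moreover have "Suc (L-2) = L - 1" using L L_def by simp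
        ultimately have 1: "{z, vs!(L-2)} \<in> E" using k True by (simp add: insert_commute)
        have 2: "{z, vs!0} \<in> E" using c k True lastv hdv by simp
        have "L-2 \<noteq> 0" "L-2 < length vs" "0 < length vs" using L L_def by auto
        then have neq: "vs!(L-2) \<noteq> vs!0" using d nth_eq_iff_index_eq by metis
        show ?thesis using 1 2 neq by blast
      next
        case False2: False
        have "k-1 < length vs - 1" using k L_def False by simp
        then have "{vs!(k-1), vs!Suc (k-1)} \<in> E" using e by blast
        then have 1: "{z, vs!(k-1)} \<in> E" using k False by (simp add: insert_commute)
        have "k < length vs - 1" using k L_def False2 by simp
        then have 2: "{z, vs!(Suc k)} \<in> E" using e k by blast
        have "k-1 \<noteq> Suc k" "k-1 < length vs" "Suc k < length vs" using k L_def False2 by auto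
        then have neq: "vs!(k-1) \<noteq> vs!(Suc k)" using d nth_eq_iff_index_eq by metis
        show ?thesis using 1 2 neq by blast
      qed
    qed
  qed
  show ?thesis by (rule exI[of _ vs]) (use L d e c nb in simp)
qed



lemma graph_edge: "is_graph V E \<Longrightarrow> e \<in> E \<Longrightarrow> \<exists>u v. u \<in> V \<and> v \<in> V \<and> u \<noteq> v \<and> e = {u, v}"
  unfolding is_graph_def by blast

lemma graph_edge_sub: "is_graph V E \<Longrightarrow> e \<in> E \<Longrightarrow> e \<subseteq> V"
  using graph_edge by fastforce

lemma add_leaf_tree:
  assumes t: "is_tree V E" and v: "v \<in> V" and z: "z \<notin> V"
  shows "is_tree (insert z V) (insert {v,z} E)"
proof -
  have g: "is_graph V E" and ne: "V \<noteq> {}" and c: "connected_graph V E" and nc: "\<not> has_cycle E"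
    using t unfolding is_tree_def by auto
  have vz: "v \<noteq> z" using v z by auto
  have g2: "is_graph (insert z V) (insert {v,z} E)"
    unfolding is_graph_def
  proof
    show "finite (insert z V)" using g unfolding is_graph_def by simp
    show "\<forall>e\<in>insert {v, z} E. \<exists>u w. u \<in> insert z V \<and> w \<in> insert z V \<and> u \<noteq> w \<and> e = {u, w}"
    proof
      fix e assume "e \<in> insert {v, z} E"
      then show "\<exists>u w. u \<in> insert z V \<and> w \<in> insert z V \<and> u \<noteq> w \<and> e = {u, w}"
      proof
        assume "e = {v,z}" then show ?thesis using v vz by (intro exI[of _ v] exI[of _ z]) simp
      next
        assume "e \<in> E"
        then obtain u w where "u \<in> V" "w \<in> V" "u \<noteq> w" "e = {u,w}" using graph_edge[OF g] by blast
        then show ?thesis by (intro exI[of _ u] exI[of _ w]) simp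
      qed
    qed
  qed
  have zE: "\<forall>e\<in>E. z \<notin> e" using graph_edge_sub[OF g] z by blast
  have adjsub: "adj E \<subseteq> adj (insert {v,z} E)" unfolding adj_def by auto
  have r1: "(v, z) \<in> (adj (insert {v,z} E))\<^sup>*" unfolding adj_def by auto
  have r2: "(z, v) \<in> (adj (insert {v,z} E))\<^sup>*" unfolding adj_def by (auto simp: insert_commute)
  have rold: "(a, b) \<in> (adj (insert {v,z} E))\<^sup>*" if "a \<in> V" "b \<in> V" for a b
    using c that rtrancl_mono[OF adjsub] unfolding connected_graph_def by blast
  have c2: "connected_graph (insert z V) (insert {v,z} E)"
    unfolding connected_graph_def
  proof (intro ballI)
    fix a b assume a: "a \<in> insert z V" and b: "b \<in> insert z V"
    show "(a, b) \<in> (adj (insert {v,z} E))\<^sup>*"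
    proof (cases "a = z")
      case True
      show ?thesis
      proof (cases "b = z")
        case True then show ?thesis using \<open>a = z\<close> by simp
      next
        case False
        then have "b \<in> V" using b by simp
        then show ?thesis using True r2 rold[OF v] by (meson rtrancl_trans)
      qed
    next
      case False
      then have aV: "a \<in> V" using a by simp
      show ?thesis
      proof (cases "b = z")
        case True then show ?thesis using r1 rold[OF aV v] by (meson rtrancl_trans)
      next
        case False
        then have "b \<in> V" using b by simp
        then show ?thesis using rold aV by blast
      qed
    qed
  qed
  have nc2: "\<not> has_cycle (insert {v,z} E)"
  proof
    assume h: "has_cycle (insert {v,z} E)"
    obtain vs where L: "length vs \<ge> 3" and d: "distinct vs"
      and e: "\<forall>i < length vs - 1. {vs ! i, vs ! (Suc i)} \<in> insert {v,z} E"
      and cl: "{last vs, hd vs} \<in> insert {v,z} E"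
      and nb: "\<forall>w\<in>set vs. \<exists>p q. p \<noteq> q \<and> {w,p} \<in> insert {v,z} E \<and> {w,q} \<in> insert {v,z} E"
      using cycle_vertex_two_nbrs[OF h] apply (elim exE conjE) apply (rule that) apply assumption+ done
    show False
    proof (cases "z \<in> set vs")
      case True
      then obtain p q where pq: "p \<noteq> q" "{z,p} \<in> insert {v,z} E" "{z,q} \<in> insert {v,z} E"
        using nb by blast
      have "p = v" if "{z,p} \<in> insert {v,z} E" for p
      proof -
        have "{z,p} \<notin> E" using zE by auto
        then have "{z,p} = {v,z}" using that by blast
        then show "p = v" using vz by (auto simp: doubleton_eq_iff)
      qed
      then show False using pq by blast
    next
      case False
      have ne: "vs \<noteq> []" using L by auto
      have e2: "\<forall>i < length vs - 1. {vs ! i, vs ! (Suc i)} \<in> E"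
      proof (intro allI impI)
        fix i assume i: "i < length vs - 1"
        have "vs ! i \<in> set vs" "vs ! Suc i \<in> set vs" using i by auto
        then have "{vs ! i, vs ! (Suc i)} \<noteq> {v,z}" using False
          by (metis insertCI insertE singletonD)
        then show "{vs ! i, vs ! (Suc i)} \<in> E" using e i by blast
      qed
      have "last vs \<in> set vs" "hd vs \<in> set vs" using ne by auto
      then have "{last vs, hd vs} \<noteq> {v,z}" using False
          by (metis insertCI insertE singletonD)
      then have "{last vs, hd vs} \<in> E" using cl by blast
      then have "has_cycle E" unfolding has_cycle_def using L d e2 by (intro exI[of _ vs]) simp
      then show False using nc by simp
    qed
  qed
  show ?thesis unfolding is_tree_def using g2 c2 nc2 by simp
qed

lemma sdeg_insert:
  assumes "finite E" "e0 \<notin> E"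
  shows "sdeg (insert e0 E) (s(e0:=b)) u = sdeg E s u + (if u \<in> e0 then (if b then 1 else -1) else 0)"
proof -
  have P: "{e \<in> insert e0 E. u \<in> e \<and> (s(e0:=b)) e} = (if u \<in> e0 \<and> b then insert e0 {e \<in> E. u \<in> e \<and> s e} else {e \<in> E. u \<in> e \<and> s e})"
    using assms(2) by auto
  have N: "{e \<in> insert e0 E. u \<in> e \<and> \<not> (s(e0:=b)) e} = (if u \<in> e0 \<and> \<not> b then insert e0 {e \<in> E. u \<in> e \<and> \<not> s e} else {e \<in> E. u \<in> e \<and> \<not> s e})"
    using assms(2) by auto
  show ?thesis unfolding sdeg_def P N using assms by (auto simp: card_insert_if)
qed

lemma sdeg_none: "\<forall>e\<in>E. u \<notin> e \<Longrightarrow> sdeg E s u = 0"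
proof -
  assume "\<forall>e\<in>E. u \<notin> e"
  then have a: "{e \<in> E. u \<in> e \<and> s e} = {}" and b: "{e \<in> E. u \<in> e \<and> \<not> s e} = {}" by auto
  show ?thesis unfolding sdeg_def a b by simp
qed



lemma edge_props: "is_graph V E \<Longrightarrow> {a,b} \<in> E \<Longrightarrow> a \<noteq> b \<and> a \<in> V \<and> b \<in> V"
proof -
  assume g: "is_graph V E" and e: "{a,b} \<in> E"
  obtain u w where "u \<in> V" "w \<in> V" "u \<noteq> w" "{a,b} = {u,w}" using graph_edge[OF g e] by blast
  then show ?thesis by (auto simp: doubleton_eq_iff)
qed

lemma edge_other: "is_graph V E \<Longrightarrow> e \<in> E \<Longrightarrow> a \<in> e \<Longrightarrow> \<exists>b. e = {a,b}"
proof -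
  assume g: "is_graph V E" and e: "e \<in> E" and a: "a \<in> e"
  obtain u w where "e = {u,w}" using graph_edge[OF g e] by blast
  then show ?thesis using a by (auto simp: insert_commute)
qed

lemma leaf_exists:
  assumes g: "is_graph V E" and nc: "\<not> has_cycle E" and ne: "V \<noteq> {}"
  shows "\<exists>a\<in>V. card {e\<in>E. a\<in>e} \<le> 1"
proof -
  define P where "P ps = (ps \<noteq> [] \<and> distinct ps \<and> set ps \<subseteq> V \<and> (\<forall>i<length ps - 1. {ps!i, ps!Suc i} \<in> E))" for ps
  obtain v0 where v0: "v0 \<in> V" using ne by blast
  have P0: "P [v0]" unfolding P_def using v0 by simp
  have fV: "finite V" using g unfolding is_graph_def by simp
  have bnd: "\<forall>ps. P ps \<longrightarrow> length ps < card V + 1"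
  proof (intro allI impI)
    fix ps assume "P ps"
    then have "distinct ps" "set ps \<subseteq> V" unfolding P_def by auto
    then have "length ps \<le> card V" using fV by (metis card_mono distinct_card)
    then show "length ps < card V + 1" by simp
  qed
  obtain ps where Pps: "P ps" and mx: "\<forall>qs. P qs \<longrightarrow> length qs \<le> length ps"
    using ex_has_greatest_nat[of P "[v0]" length "card V + 1", OF P0 bnd] by blast
  define n where "n = length ps"
  define a where "a = last ps"
  have psne: "ps \<noteq> []" and dps: "distinct ps" and sps: "set ps \<subseteq> V"
    and eps: "\<forall>i<length ps - 1. {ps!i, ps!Suc i} \<in> E" using Pps unfolding P_def by auto
  have n1: "n \<ge> 1" using psne n_def by (cases ps) auto
  have alast: "a = ps ! (n-1)" using psne a_def n_def by (simp add: last_conv_nth)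
  have aV: "a \<in> V" using sps psne a_def by auto
  have nbr: "n \<ge> 2 \<and> b = ps ! (n-2)" if ab: "{a,b} \<in> E" for b
  proof -
    have abn: "a \<noteq> b" and bV: "b \<in> V" using edge_props[OF g ab] by auto
    have bin: "b \<in> set ps"
    proof (rule ccontr)
      assume bn: "b \<notin> set ps"
      have "P (ps @ [b])"
        unfolding P_def
      proof (intro conjI)
        show "ps @ [b] \<noteq> []" by simp
        show "distinct (ps @ [b])" using dps bn by simp
        show "set (ps @ [b]) \<subseteq> V" using sps bV by simp
        show "\<forall>i<length (ps @ [b]) - 1. {(ps @ [b]) ! i, (ps @ [b]) ! Suc i} \<in> E"
        proof (intro allI impI)
          fix i assume i: "i < length (ps @ [b]) - 1"
          show "{(ps @ [b]) ! i, (ps @ [b]) ! Suc i} \<in> E"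
          proof (cases "i < n - 1")
            case True
            then have "{ps ! i, ps ! Suc i} \<in> E" using eps n_def by simp
            moreover have "Suc i < length ps" "i < length ps" using True n_def by auto
            ultimately show ?thesis by (simp add: nth_append)
          next
            case False
            then have "i = n - 1" using i n_def by simp
            moreover have "n - 1 < length ps" using n1 n_def by simp
            ultimately have i1: "(ps @ [b]) ! i = a" using alast by (simp add: nth_append)
            have "Suc i = length ps" using \<open>i = n - 1\<close> n1 n_def by simp
            then have i2: "(ps @ [b]) ! Suc i = b" by (metis nth_append_length)
            show ?thesis using ab i1 i2 by simp
          qed
        qed
      qed
      then have "length (ps @ [b]) \<le> length ps" using mx by blast
      then show False by simp
    qed
    then obtain j where j: "j < n" "b = ps ! j" using n_def by (metis in_set_conv_nth)
    have jn: "j \<noteq> n - 1" using j abn alast by auto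
    then have n2: "n \<ge> 2" using j by simp
    have "j = n - 2"
    proof (rule ccontr)
      assume "j \<noteq> n - 2"
      then have jl: "j + 3 \<le> n" using j jn by simp
      define vs where "vs = drop j ps"
      have lv: "length vs = n - j" using vs_def n_def by simp
      have "has_cycle E"
        unfolding has_cycle_def
      proof (intro exI[of _ vs] conjI)
        show "3 \<le> length vs" using lv jl by simp
        show "distinct vs" using dps vs_def by simp
        show "\<forall>i<length vs - 1. {vs ! i, vs ! Suc i} \<in> E"
        proof (intro allI impI)
          fix i assume "i < length vs - 1"
          then have "j + i < length ps - 1" using lv n_def by simp
          then have "{ps ! (j+i), ps ! Suc (j+i)} \<in> E" using eps by blast
          then show "{vs ! i, vs ! Suc i} \<in> E" using vs_def jl n_def by simp
        qed
        have "last vs = a" using vs_def a_def j n_def by simp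
        moreover have "hd vs = b" using vs_def j n_def by (simp add: hd_drop_conv_nth)
        ultimately show "{last vs, hd vs} \<in> E" using ab by simp
      qed
      then show False using nc by simp
    qed
    then show ?thesis using n2 j by simp
  qed
  have sub: "{e\<in>E. a\<in>e} \<subseteq> {{a, ps ! (n-2)}}"
  proof
    fix e assume "e \<in> {e\<in>E. a\<in>e}"
    then have eE: "e \<in> E" and ae: "a \<in> e" by auto
    obtain b where eb: "e = {a,b}" using edge_other[OF g eE ae] by blast
    then have "b = ps ! (n-2)" using nbr eE by blast
    then show "e \<in> {{a, ps ! (n-2)}}" using eb by simp
  qed
  have "card {e\<in>E. a\<in>e} \<le> card {{a, ps ! (n-2)}}" by (rule card_mono[OF _ sub]) simp
  then show ?thesis using aV by auto
qed

lemma forest_card: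
  "is_graph V E \<Longrightarrow> \<not> has_cycle E \<Longrightarrow> V \<noteq> {} \<Longrightarrow> card E < card V"
proof (induction "card V" arbitrary: V E rule: less_induct)
  case less
  have g: "is_graph V E" and nc: "\<not> has_cycle E" and ne: "V \<noteq> {}" using less.prems by auto
  have fV: "finite V" using g unfolding is_graph_def by simp
  have fE: "finite E" using graph_finite_E[OF g] .
  obtain a where aV: "a \<in> V" and da: "card {e\<in>E. a\<in>e} \<le> 1" using leaf_exists[OF g nc ne] by blast
  define V' where "V' = V - {a}"
  define E' where "E' = {e\<in>E. a\<notin>e}"
  have Esplit: "E = E' \<union> {e\<in>E. a\<in>e}" unfolding E'_def by auto
  have cE: "card E \<le> card E' + 1"
  proof -
    have "card E \<le> card E' + card {e\<in>E. a\<in>e}"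
      using Esplit card_Un_le by metis
    then show ?thesis using da by simp
  qed
  show ?case
  proof (cases "V' = {}")
    case True
    then have Va: "V = {a}" using aV V'_def by auto
    have "E = {}"
    proof (rule ccontr)
      assume "E \<noteq> {}"
      then obtain e where "e \<in> E" by blast
      then obtain u w where "u \<in> V" "w \<in> V" "u \<noteq> w" using graph_edge[OF g] by blast
      then show False using Va by simp
    qed
    then show ?thesis using Va by simp
  next
    case False
    have g': "is_graph V' E'"
      unfolding is_graph_def
    proof (intro conjI ballI)
      show "finite V'" using fV V'_def by simp
      fix e assume "e \<in> E'"
      then have eE: "e \<in> E" and ae: "a \<notin> e" unfolding E'_def by auto
      obtain u w where "u \<in> V" "w \<in> V" "u \<noteq> w" "e = {u,w}" using graph_edge[OF g eE] by blast
      then show "\<exists>u v. u \<in> V' \<and> v \<in> V' \<and> u \<noteq> v \<and> e = {u, v}"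
        using ae V'_def by (intro exI[of _ u] exI[of _ w]) auto
    qed
    have nc': "\<not> has_cycle E'" using nc has_cycle_mono[of E' E] E'_def by auto
    have "card V > 0" using aV fV card_gt_0_iff by blast
    then have lt: "card V' < card V" using aV fV V'_def by simp
    have "card E' < card V'" using less.hyps[OF lt g' nc' False] .
    moreover have "card V = card V' + 1" using aV fV V'_def
      by (metis card_Suc_Diff1 Suc_eq_plus1)
    ultimately show ?thesis using cE by simp
  qed
qed

lemma handshake:
  assumes g: "is_graph V E"
  shows "(\<Sum>v\<in>V. card {e\<in>E. v\<in>e}) = 2 * card E"
proof -
  have fV: "finite V" using g unfolding is_graph_def by simp
  have fE: "finite E" using graph_finite_E[OF g] .
  have "(\<Sum>v\<in>V. card {e\<in>E. v\<in>e}) = (\<Sum>v\<in>V. \<Sum>e\<in>E. if v \<in> e then 1 else 0)"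
    using fE by (simp add: sum.inter_filter[symmetric])
  also have "\<dots> = (\<Sum>e\<in>E. \<Sum>v\<in>V. if v \<in> e then 1 else 0)" by (rule sum.swap)
  also have "\<dots> = (\<Sum>e\<in>E. 2)"
  proof (rule sum.cong[OF refl])
    fix e assume eE: "e \<in> E"
    obtain u w where uw: "u \<in> V" "w \<in> V" "u \<noteq> w" "e = {u,w}" using graph_edge[OF g eE] by blast
    have "(\<Sum>v\<in>V. if v \<in> e then 1 else 0) = card {v\<in>V. v\<in>e}"
      using fV by (simp add: sum.inter_filter[symmetric])
    also have "{v\<in>V. v\<in>e} = {u,w}" using uw by auto
    finally show "(\<Sum>v\<in>V. if v \<in> e then 1 else 0) = (2::nat)" using uw by simp
  qed
  finally show ?thesis by simp
qed



lemma tree_finite: "is_tree V E \<Longrightarrow> finite V"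
  unfolding is_tree_def is_graph_def by simp

lemma add_leaves:
  assumes t: "is_tree V E" and l: "l \<in> V"
  shows "\<exists>V' E' s'. is_tree V' E' \<and> V \<subseteq> V' \<and> card V' = card V + m
     \<and> (\<forall>u\<in>V-{l}. sdeg E' s' u = sdeg E s u) \<and> sdeg E' s' l = sdeg E s l + int m
     \<and> (\<forall>u\<in>V'-V. sdeg E' s' u = 1)"
proof (induction m)
  case 0
  show ?case by (intro exI[of _ V] exI[of _ E] exI[of _ s]) (simp add: t)
next
  case (Suc m)
  then obtain V' E' s' where t': "is_tree V' E'" and sub: "V \<subseteq> V'" and c: "card V' = card V + m"
    and h1: "\<forall>u\<in>V-{l}. sdeg E' s' u = sdeg E s u" and h2: "sdeg E' s' l = sdeg E s l + int m"
    and h3: "\<forall>u\<in>V'-V. sdeg E' s' u = 1" by blast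
  have fV': "finite V'" using tree_finite[OF t'] .
  have g': "is_graph V' E'" using t' unfolding is_tree_def by simp
  have fE': "finite E'" using graph_finite_E[OF g'] .
  obtain z where z: "z \<notin> V'" using ex_new_if_finite[OF infinite_UNIV_nat fV'] by blast
  have lV': "l \<in> V'" using l sub by blast
  have zE: "\<forall>e\<in>E'. z \<notin> e" using graph_edge_sub[OF g'] z by blast
  have nE: "{l,z} \<notin> E'" using zE by blast
  have lz: "l \<noteq> z" using lV' z by blast
  define s2 where "s2 = s'({l,z} := True)"
  have sd: "sdeg (insert {l,z} E') s2 u = sdeg E' s' u + (if u \<in> {l,z} then 1 else 0)" for u
    unfolding s2_def using sdeg_insert[OF fE' nE, of s' True u] by simp
  have sz: "sdeg E' s' z = 0" using sdeg_none[OF zE] .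
  show ?case
  proof (intro exI[of _ "insert z V'"] exI[of _ "insert {l,z} E'"] exI[of _ s2] conjI ballI)
    show "is_tree (insert z V') (insert {l, z} E')" using add_leaf_tree[OF t' lV' z] .
    show "V \<subseteq> insert z V'" using sub by blast
    show "card (insert z V') = card V + Suc m" using c z fV' by simp
    fix u assume "u \<in> V - {l}"
    then have "u \<noteq> l" "u \<noteq> z" using z sub by auto
    then show "sdeg (insert {l, z} E') s2 u = sdeg E s u" using sd h1 \<open>u \<in> V - {l}\<close> by simp
  next
    show "sdeg (insert {l, z} E') s2 l = sdeg E s l + int (Suc m)" using sd h2 by simp
  next
    fix u assume u: "u \<in> insert z V' - V"
    show "sdeg (insert {l, z} E') s2 u = 1"
    proof (cases "u = z")
      case True then show ?thesis using sd sz by simp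
    next
      case False
      then have "u \<in> V' - V" "u \<noteq> l" using u l by auto
      then show ?thesis using sd h3 False by simp
    qed
  qed
qed

lemma base_tree:
  "\<exists>V E s l. is_tree V E \<and> l \<in> V \<and> sdeg E s l = 1 \<and> card V = 4 \<and> sdeg E s ` (V - {l}) \<union> {1} = {1,0}"
proof -
  have t0: "is_tree {0::nat} {}"
    unfolding is_tree_def is_graph_def connected_graph_def has_cycle_def by simp
  have t1: "is_tree (insert 1 {0::nat}) (insert {0,1} {})" by (rule add_leaf_tree[OF t0]) auto
  have t2: "is_tree (insert 2 (insert 1 {0::nat})) (insert {1,2} (insert {0,1} {}))"
    by (rule add_leaf_tree[OF t1]) auto
  have t3: "is_tree (insert 3 (insert 2 (insert 1 {0::nat}))) (insert {0,3} (insert {1,2} (insert {0,1} {})))"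
    by (rule add_leaf_tree[OF t2]) auto
  define s0 :: "nat set \<Rightarrow> bool" where "s0 = (\<lambda>_. True)"
  define s1 where "s1 = s0({0,1} := False)"
  define s2 where "s2 = s1({1,2} := True)"
  define s3 where "s3 = s2({0,3} := True)"
  have d1: "sdeg (insert {0,1} {}) s1 u = (if u \<in> {0,1} then -1 else 0)" for u
    unfolding s1_def using sdeg_insert[of "{}" "{0::nat,1}" s0 False u] sdeg_none[of "{}" u s0] by simp
  have d2: "sdeg (insert {1,2} (insert {0,1} {})) s2 u = sdeg (insert {0,1} {}) s1 u + (if u \<in> {1,2} then 1 else 0)" for u
  proof -
    have "{1,2} \<notin> insert {0::nat,1} {}" by (auto simp: doubleton_eq_iff)
    then show ?thesis unfolding s2_def using sdeg_insert[of "insert {0::nat,1} {}" "{1,2}" s1 True u] by simp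
  qed
  have d3: "sdeg (insert {0,3} (insert {1,2} (insert {0,1} {}))) s3 u = sdeg (insert {1,2} (insert {0,1} {})) s2 u + (if u \<in> {0,3} then 1 else 0)" for u
  proof -
    have "{0,3} \<notin> insert {1,2} (insert {0::nat,1} {})" by (auto simp: doubleton_eq_iff)
    then show ?thesis unfolding s3_def using sdeg_insert[of "insert {1,2} (insert {0::nat,1} {})" "{0,3}" s2 True u] by simp
  qed
  let ?E = "insert {0,3} (insert {1,2} (insert {0::nat,1} {}))"
  have v0: "sdeg ?E s3 0 = 0" using d1 d2 d3 by simp
  have v1: "sdeg ?E s3 1 = 0" using d1 d2 d3 by simp
  have v2: "sdeg ?E s3 2 = 1" using d1 d2 d3 by simp
  have v3: "sdeg ?E s3 3 = 1" using d1 d2 d3 by simp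
  have im: "sdeg ?E s3 ` (insert 3 (insert 2 (insert 1 {0::nat})) - {3}) = {0,1}"
  proof -
    have "insert 3 (insert 2 (insert 1 {0::nat})) - {3} = {0,1,2}" by auto
    then show ?thesis using v0 v1 v2 by auto
  qed
  show ?thesis
    by (intro exI[of _ "insert 3 (insert 2 (insert 1 {0::nat}))"] exI[of _ ?E] exI[of _ s3] exI[of _ 3])
       (use t3 v3 im in auto)
qed



lemma construct:
  fixes x :: "nat \<Rightarrow> int"
  shows "\<forall>i\<in>{1..k}. x i \<ge> 2 \<Longrightarrow> \<exists>V E s l. is_tree V E \<and> l \<in> V \<and> sdeg E s l = 1 \<and>
     int (card V) = 4 + (\<Sum>i=1..k. x i - 1) \<and> sdeg E s ` (V - {l}) \<union> {1} = {1,0} \<union> x ` {1..k}"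
proof (induction k)
  case 0
  obtain V E s l where "is_tree V E" "l \<in> V" "sdeg E s l = 1" "card V = 4" "sdeg E s ` (V - {l}) \<union> {1} = {1,0}"
    using base_tree by blast
  then show ?case by (intro exI[of _ V] exI[of _ E] exI[of _ s] exI[of _ l]) simp
next
  case (Suc k)
  have hk: "\<forall>i\<in>{1..k}. x i \<ge> 2" using Suc.prems by auto
  obtain V E s l where t: "is_tree V E" and lV: "l \<in> V" and sl: "sdeg E s l = 1"
    and cV: "int (card V) = 4 + (\<Sum>i=1..k. x i - 1)"
    and im: "sdeg E s ` (V - {l}) \<union> {1} = {1,0} \<union> x ` {1..k}"
    using Suc.IH[OF hk] by blast
  have xk: "x (Suc k) \<ge> 2" using Suc.prems by auto
  define m where "m = nat (x (Suc k) - 1)"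
  have m1: "m \<ge> 1" and mi: "int m = x (Suc k) - 1" using xk m_def by auto
  obtain V' E' s' where t': "is_tree V' E'" and sub: "V \<subseteq> V'" and c: "card V' = card V + m"
    and h1: "\<forall>u\<in>V-{l}. sdeg E' s' u = sdeg E s u" and h2: "sdeg E' s' l = sdeg E s l + int m"
    and h3: "\<forall>u\<in>V'-V. sdeg E' s' u = 1" using add_leaves[OF t lV, of m s] by blast
  have fV: "finite V" using tree_finite[OF t] .
  have "V' - V \<noteq> {}"
  proof
    assume "V' - V = {}"
    then have "V' = V" using sub by blast
    then show False using c m1 by simp
  qed
  then obtain l' where l': "l' \<in> V'" "l' \<notin> V" by blast
  have sl': "sdeg E' s' l' = 1" using h3 l' by blast
  have sl2: "sdeg E' s' l = x (Suc k)" using h2 sl mi by simp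
  have card': "int (card V') = 4 + (\<Sum>i=1..Suc k. x i - 1)"
    using c cV mi by simp
  have im': "sdeg E' s' ` (V' - {l'}) \<union> {1} = {1,0} \<union> x ` {1..Suc k}"
  proof
    show "sdeg E' s' ` (V' - {l'}) \<union> {1} \<subseteq> {1,0} \<union> x ` {1..Suc k}"
    proof
      fix y assume "y \<in> sdeg E' s' ` (V' - {l'}) \<union> {1}"
      then consider "y = 1" | u where "u \<in> V' - {l'}" "y = sdeg E' s' u" by blast
      then show "y \<in> {1,0} \<union> x ` {1..Suc k}"
      proof cases
        case 1 then show ?thesis by simp
      next
        case (2 u)
        show ?thesis
        proof (cases "u \<in> V")
          case True
          show ?thesis
          proof (cases "u = l")
            case True then show ?thesis using 2 sl2 by auto
          next
            case False
            then have "y = sdeg E s u" using 2 h1 \<open>u \<in> V\<close> by simp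
            then have "y \<in> {1,0} \<union> x ` {1..k}" using im \<open>u \<in> V\<close> False by blast
            then show ?thesis by auto
          qed
        next
          case False
          then show ?thesis using 2 h3 by auto
        qed
      qed
    qed
  next
    show "{1,0} \<union> x ` {1..Suc k} \<subseteq> sdeg E' s' ` (V' - {l'}) \<union> {1}"
    proof
      fix y assume y: "y \<in> {1,0} \<union> x ` {1..Suc k}"
      show "y \<in> sdeg E' s' ` (V' - {l'}) \<union> {1}"
      proof (cases "y = 1")
        case True then show ?thesis by simp
      next
        case ne1: False
        show ?thesis
        proof (cases "y = x (Suc k)")
          case True
          have "l \<in> V' - {l'}" using lV sub l' by auto
          then show ?thesis using True sl2 by (metis UnI1 image_eqI)
        next
          case False
          then have "y \<in> {1,0} \<union> x ` {1..k}" using y by (auto simp: atLeastAtMostSuc_conv)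
          then have "y \<in> sdeg E s ` (V - {l})" using im ne1 by blast
          then obtain u where u: "u \<in> V - {l}" "y = sdeg E s u" by blast
          then have "u \<in> V' - {l'}" using sub l' by auto
          moreover have "y = sdeg E' s' u" using u h1 by simp
          ultimately show ?thesis by blast
        qed
      qed
    qed
  qed
  show ?case
    by (intro exI[of _ V'] exI[of _ E'] exI[of _ s'] exI[of _ l']) (use t' l' sl' card' im' in simp)
qed



lemma conn_has_edge:
  assumes "connected_graph V E" "u \<in> V" "v \<in> V" "u \<noteq> v"
  shows "\<exists>e\<in>E. u \<in> e"
proof -
  have "(u, v) \<in> (adj E)\<^sup>*" using assms unfolding connected_graph_def by blast
  then obtain y where "(u, y) \<in> adj E" using assms(4) by (metis converse_rtranclE)
  then have "{u,y} \<in> E" unfolding adj_def by simp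
  then show ?thesis by blast
qed

lemma card_split: "finite A \<Longrightarrow> card {e\<in>A. P e} = card {e\<in>A. P e \<and> Q e} + card {e\<in>A. P e \<and> \<not> Q e}"
proof -
  assume f: "finite A"
  have "{e\<in>A. P e} = {e\<in>A. P e \<and> Q e} \<union> {e\<in>A. P e \<and> \<not> Q e}" by auto
  moreover have "card ({e\<in>A. P e \<and> Q e} \<union> {e\<in>A. P e \<and> \<not> Q e}) = card {e\<in>A. P e \<and> Q e} + card {e\<in>A. P e \<and> \<not> Q e}"
    by (rule card_Un_disjoint) (use f in auto)
  ultimately show ?thesis by simp
qed

lemma lower:
  fixes x :: "nat \<Rightarrow> int"
  assumes n: "n \<ge> 1" and inj: "inj_on x {1..n}" and xg: "\<forall>i\<in>{1..n}. x i > 1"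
    and r: "realizes V E s ({1, 0} \<union> x ` {1..n})"
  shows "int (card V) \<ge> 4 - int n + (\<Sum>i=1..n. x i)"
proof -
  have t: "is_tree V E" and D: "{1, 0} \<union> x ` {1..n} = sdeg E s ` V" using r unfolding realizes_def by auto
  have g: "is_graph V E" and ne: "V \<noteq> {}" and cn: "connected_graph V E" and nc: "\<not> has_cycle E"
    using t unfolding is_tree_def by auto
  have fV: "finite V" using g unfolding is_graph_def by simp
  have fE: "finite E" using graph_finite_E[OF g] .
  define pos where "pos u = card {e\<in>E. u\<in>e \<and> s e}" for u
  define neg where "neg u = card {e\<in>E. u\<in>e \<and> \<not> s e}" for u
  define dg where "dg u = card {e\<in>E. u\<in>e}" for u
  have dgpn: "dg u = pos u + neg u" for u unfolding dg_def pos_def neg_def using card_split[OF fE] by blast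
  have sd: "sdeg E s u = int (pos u) - int (neg u)" for u unfolding sdeg_def pos_def neg_def by simp
  have "0 \<in> sdeg E s ` V" using D[symmetric] by blast
  then obtain w where wV: "w \<in> V" and sw0: "0 = sdeg E s w" by (rule imageE)
  note sw = sw0[symmetric]
  have "1 \<in> sdeg E s ` V" using D[symmetric] by blast
  then obtain v1 where v1V: "v1 \<in> V" and sv10: "1 = sdeg E s v1" by (rule imageE)
  note sv1 = sv10[symmetric]
  have wv1: "w \<noteq> v1" using sw sv1 by auto
  have dg1: "dg u \<ge> 1" if uV: "u \<in> V" for u
  proof -
    obtain u' where "u' \<in> V" "u \<noteq> u'"
      using wV v1V wv1 by (cases "u = w") auto
    then obtain e where "e \<in> E" "u \<in> e" using conn_has_edge[OF cn uV] by blast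
    then have "{e\<in>E. u\<in>e} \<noteq> {}" by blast
    then show ?thesis unfolding dg_def using fE by (simp add: Suc_le_eq card_gt_0_iff)
  qed
  have "\<forall>i\<in>{1..n}. \<exists>v\<in>V. sdeg E s v = x i"
  proof
    fix i assume "i \<in> {1..n}"
    then have "x i \<in> sdeg E s ` V" using D by blast
    then obtain v where "v \<in> V" "x i = sdeg E s v" by (rule imageE)
    then show "\<exists>v\<in>V. sdeg E s v = x i" by metis
  qed
  then obtain a where a: "\<forall>i\<in>{1..n}. a i \<in> V \<and> sdeg E s (a i) = x i" by metis
  have inja: "inj_on a {1..n}"
  proof (rule inj_onI)
    fix i j assume "i \<in> {1..n}" "j \<in> {1..n}" "a i = a j"
    then have "x i = x j" using a by metis
    then show "i = j" using inj \<open>i \<in> {1..n}\<close> \<open>j \<in> {1..n}\<close> by (meson inj_onD)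
  qed
  define A where "A = a ` {1..n}"
  have AV: "A \<subseteq> V" using a A_def by auto
  have cA: "card A = n" using inja A_def by (simp add: card_image)
  have sA: "sdeg E s u > 1" if "u \<in> A" for u using that a xg A_def by auto
  have wA: "w \<notin> A" using sA sw by fastforce
  have fA: "finite A" using AV fV finite_subset by blast
  have negw: "neg w \<ge> 1"
  proof -
    have "pos w = neg w" using sw sd by simp
    then show ?thesis using dg1[OF wV] dgpn by simp
  qed
  then have "{e\<in>E. w\<in>e \<and> \<not> s e} \<noteq> {}" unfolding neg_def by (metis card.empty not_one_le_zero)
  then obtain e0 where e0: "e0 \<in> E" "w \<in> e0" "\<not> s e0" by blast
  obtain y where ey: "e0 = {w,y}" using edge_other[OF g e0(1) e0(2)] by blast
  have yw: "y \<noteq> w" and yV: "y \<in> V" using edge_props[OF g] e0(1) ey by auto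
  have negy: "neg y \<ge> 1"
  proof -
    have "e0 \<in> {e\<in>E. y\<in>e \<and> \<not> s e}" using e0 ey by simp
    then have "{e\<in>E. y\<in>e \<and> \<not> s e} \<noteq> {}" by blast
    then show ?thesis unfolding neg_def using fE by (simp add: Suc_le_eq card_gt_0_iff)
  qed
  define f where "f u = (if u = w then 2 else if u \<in> A then sdeg E s u else 1)" for u
  have fle: "int (dg u) \<ge> f u" if "u \<in> V" for u
  proof -
    have "u = w \<Longrightarrow> ?thesis" using negw sw sd dgpn f_def by simp
    moreover have "u \<noteq> w \<Longrightarrow> u \<in> A \<Longrightarrow> ?thesis" using sd dgpn f_def by simp
    moreover have "u \<noteq> w \<Longrightarrow> u \<notin> A \<Longrightarrow> ?thesis" using dg1[OF that] f_def by simp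
    ultimately show ?thesis by blast
  qed
  have fy: "int (dg y) \<ge> f y + 1"
  proof (cases "y \<in> A")
    case True
    then show ?thesis using negy sd dgpn f_def yw by simp
  next
    case False
    have "dg y \<ge> 2"
    proof (rule ccontr)
      assume "\<not> dg y \<ge> 2"
      then have "dg y = 1" using dg1[OF yV] by simp
      then have "pos y = 0" "neg y = 1" using dgpn negy by auto
      then have "sdeg E s y = -1" using sd by simp
      then have "-1 \<in> {1, 0} \<union> x ` {1..n}" using D yV by (metis image_eqI)
      then show False using xg by auto
    qed
    then show ?thesis using False f_def yw by simp
  qed
  have s1: "(\<Sum>u\<in>V. int (dg u) - f u) \<ge> 1"
  proof -
    have "int (dg y) - f y \<le> (\<Sum>u\<in>V. int (dg u) - f u)"
      by (rule member_le_sum) (use fle yV fV in auto)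
    then show ?thesis using fy by simp
  qed
  have hs: "(\<Sum>u\<in>V. int (dg u)) = 2 * int (card E)"
    using handshake[OF g] unfolding dg_def by (metis of_nat_mult of_nat_numeral of_nat_sum)
  have ce: "card E < card V" using forest_card[OF g nc ne] .
  have sf: "(\<Sum>u\<in>V. f u - 1) = 1 + (\<Sum>i=1..n. x i - 1)"
  proof -
    have "(\<Sum>u\<in>V. f u - 1) = (\<Sum>u\<in>insert w A. f u - 1)"
      by (rule sum.mono_neutral_right) (use fV AV wV fA in \<open>auto simp: f_def\<close>)
    also have "\<dots> = (f w - 1) + (\<Sum>u\<in>A. f u - 1)" using wA fA by simp
    also have "(\<Sum>u\<in>A. f u - 1) = (\<Sum>u\<in>A. sdeg E s u - 1)"
      by (rule sum.cong) (use wA f_def in auto)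
    also have "\<dots> = (\<Sum>i\<in>{1..n}. sdeg E s (a i) - 1)"
      unfolding A_def by (rule sum.reindex[OF inja, unfolded comp_def])
    also have "\<dots> = (\<Sum>i\<in>{1..n}. x i - 1)" by (rule sum.cong) (use a in auto)
    finally show ?thesis using f_def by simp
  qed
  have "(\<Sum>u\<in>V. int (dg u) - f u) = (\<Sum>u\<in>V. int (dg u)) - (\<Sum>u\<in>V. f u - 1) - int (card V)"
    by (simp add: sum_subtractf)
  then have "2 * int (card E) - (1 + (\<Sum>i=1..n. x i - 1)) - int (card V) \<ge> 1" using s1 hs sf by simp
  moreover have "(\<Sum>i=1..n. x i - 1) = (\<Sum>i=1..n. x i) - int n" by (simp add: sum_subtractf)
  ultimately show ?thesis using ce by simp
qed



theorem mainTheorem12: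
  fixes n :: nat and x :: "nat \<Rightarrow> int"
  assumes "n \<ge> 1"
    and "inj_on x {1..n}"
    and "\<forall>i\<in>{1..n}. x i > 1"
  shows "int (sigma ({1, 0} \<union> x ` {1..n})) = 4 - int n + (\<Sum>i=1..n. x i)"
proof -
  define D where "D = {1, 0} \<union> x ` {1..n}"
  have x2: "\<forall>i\<in>{1..n}. x i \<ge> 2" using assms(3) by auto
  obtain V E s l where t: "is_tree V E" and lV: "l \<in> V" and sl: "sdeg E s l = 1"
    and cV: "int (card V) = 4 + (\<Sum>i=1..n. x i - 1)"
    and im: "sdeg E s ` (V - {l}) \<union> {1} = {1,0} \<union> x ` {1..n}"
    using construct[OF x2] by blast
  have "sdeg E s ` V = sdeg E s ` (V - {l}) \<union> {sdeg E s l}" using lV by blast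
  then have DV: "D = sdeg E s ` V" using im sl D_def by simp
  have sm: "(\<Sum>i=1..n. x i - 1) = (\<Sum>i=1..n. x i) - int n" by (simp add: sum_subtractf)
  have r: "realizes V E s D" unfolding realizes_def using t DV by simp
  have lb: "int k \<ge> 4 - int n + (\<Sum>i=1..n. x i)" if "\<exists>V E s. realizes V E s D \<and> card V = k" for k
    using that lower[OF assms] D_def by blast
  have "sigma D = card V"
    unfolding sigma_def
  proof (rule Least_equality)
    show "\<exists>V' E' s'. realizes V' E' s' D \<and> card V' = card V" using r by blast
    fix k assume "\<exists>V E s. realizes V E s D \<and> card V = k"
    then have "int k \<ge> 4 - int n + (\<Sum>i=1..n. x i)" by (rule lb)
    then show "card V \<le> k" using cV sm by simp
  qed
  then show ?thesis using cV sm D_def by simp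
qed

end
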